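(* Let $n, l_z, l_c \ge 1$ be integers, let $\alpha>0$ and $\beta_d>0$ be constants, and let the following signals be defined on $[0,\infty)$: $e:[0,\infty)\to\mathbb{R}^n$ continuously differentiable; $\delta_3:[0,\infty)\to\mathbb{R}^n$ and $D:[0,\infty)\to\mathbb{R}^n$ twice continuously differentiable; for $j=1,\dots,l_z$, $\tilde z_j:[0,\infty)\to\mathbb{R}$ and $w_j:[0,\infty)\to\mathbb{R}^n$ continuously differentiable, and $\Lambda_j:[0,\infty)\to\mathbb{R}^{l_c}$, $v:[0,\infty)\to\mathbb{R}^{l_c}$, $\tilde w_j:[0,\infty)\to\mathbb{R}^n$ continuous. Define $s(t)\triangleq \dot e(t)+\alpha e(t)$, $$M_1(t)\triangleq\sum_{j=1}^{l_z}\tilde z_j(t)\,w_j(t),\qquad M_2(t)\triangleq\sum_{j=1}^{l_z}\big(\Lambda_j(t)^T v(t)\big)\,\tilde w_j(t).$$ Assume there are positive constants $\dot{\bar\delta}_3,\ddot{\bar\delta}_3,c_{d_1},c_{d_2},c_{M_1},c_{\dot M_1},c_{M_2}$ such that for all $t\ge0$: $\|\dot\delta_3(t)\|_1<\dot{\bar\delta}_3$, $\|\ddot\delta_3(t)\|_1<\ddot{\bar\delta}_3$, $\|\dot D(t)\|\le c_{d_1}$, $\|\ddot D(t)\|\le c_{d_2}$, $\|M_1(t)\|_1<c_{M_1}$, $\|\dot M_1(t)\|_1<c_{\dot M_1}$, $\|M_2(t)\|_1<c_{M_2}$. Define the scalar signal $\Omega$ by $$\Omega(t)=\Omega(0)+\int_0^t\Big[-s(\tau)^T\big(\dot\delta_3(\tau)+\dot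 D(\tau)-\beta_d\,\mathrm{sgn}(e(\tau))\big)-M_1(\tau)^T\dot e(\tau)-M_2(\tau)^Te(\tau)\Big]d\tau,$$ with $$\Omega(0)=\beta_d\|e(0)\|_1-e(0)^T\big(\dot\delta_3(0)+\dot D(0)+M_1(0)\big).$$ If $$\beta_d\ \ge\ \dot{\bar\delta}_3+c_{d_1}+c_{M_1}+\frac{1}{\alpha}\big(\ddot{\bar\delta}_3+c_{d_2}+c_{\dot M_1}+c_{M_2}\big),$$ then $\Omega(t)\ge0$ for all $t\ge0$.
   Context: $\|\cdot\|$ denotes the Euclidean norm and $\|\cdot\|_1$ the $\ell_1$ norm on $\mathbb{R}^n$; $\mathrm{sgn}(\cdot)$ is the standard sign function applied componentwise (with $\mathrm{sgn}(0)=0$). In the paper's application, $e$ is a filtered tracking error, $\delta_3$ is the estimation error of a steady-state control term, $D(t)=g^{-1}(\bar x(t))d(t)$ is the input-transformed disturbance, $\tilde z_j$ and $\tilde w_j$ are parameter estimation errors of an adaptor network, and $v$ are critic weights; for the lemma only the stated regularity and bounds are used. *)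

theory Defs
  imports "HOL-Analysis.Analysis"
begin

definition l1norm :: "real ^ 'n \<Rightarrow> real" where
  "l1norm x = (\<Sum>i\<in>UNIV. \<bar>x $ i\<bar>)"

text \<open>componentwise sign function, sgn 0 = 0\<close>
definition vsgn :: "real ^ 'n \<Rightarrow> real ^ 'n" where
  "vsgn x = (\<chi> i. sgn (x $ i))"

end

theory Submission
  imports Defs
begin

definition sk :: "real \<Rightarrow> real \<Rightarrow> real" where
  "sk \<epsilon> x = x / sqrt (x\<^sup>2 + \<epsilon>\<^sup>2)"

definition vsk :: "real \<Rightarrow> real ^ 'n \<Rightarrow> real ^ 'n" where
  "vsk \<epsilon> x = (\<chi> i. sk \<epsilon> (x $ i))"

definition phik :: "real \<Rightarrow> real ^ 'n \<Rightarrow> real" where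
  "phik \<epsilon> x = (\<Sum>i\<in>UNIV. sqrt ((x $ i)\<^sup>2 + \<epsilon>\<^sup>2))"

lemma sk_le1: "\<bar>sk \<epsilon> x\<bar> \<le> 1"
proof -
  have "\<bar>x\<bar> \<le> sqrt (x\<^sup>2 + \<epsilon>\<^sup>2)"
    by (metis add_increasing2 real_sqrt_abs real_sqrt_le_iff zero_le_power2 le_add_same_cancel1)
  show ?thesis
  proof (cases "x = 0")
    case True then show ?thesis by (simp add: sk_def)
  next
    case False
    then have r: "sqrt (x\<^sup>2 + \<epsilon>\<^sup>2) > 0" by (simp add: add_pos_nonneg)
    have "\<bar>sk \<epsilon> x\<bar> = \<bar>x\<bar> / sqrt (x\<^sup>2 + \<epsilon>\<^sup>2)" using r by (simp add: sk_def abs_divide)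
    also have "\<dots> \<le> 1" using r \<open>\<bar>x\<bar> \<le> sqrt (x\<^sup>2 + \<epsilon>\<^sup>2)\<close> by (simp add: divide_le_eq_1_pos)
    finally show ?thesis .
  qed
qed

lemma sk_lower: assumes "\<epsilon> > 0" shows "x * sk \<epsilon> x \<ge> \<bar>x\<bar> - \<epsilon>"
proof -
  let ?r = "sqrt (x\<^sup>2 + \<epsilon>\<^sup>2)"
  have r0: "?r > 0" using assms by (simp add: add_nonneg_pos)
  have r1: "?r \<le> \<bar>x\<bar> + \<epsilon>"
    using assms by (intro real_le_lsqrt) (auto simp: power2_eq_square algebra_simps)
  have r2: "\<bar>x\<bar> \<le> ?r"
    by (metis add_increasing2 real_sqrt_abs real_sqrt_le_iff zero_le_power2 le_add_same_cancel1)
  have "x * sk \<epsilon> x = x\<^sup>2 / ?r" unfolding sk_def by (simp add: power2_eq_square)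
  moreover have "\<bar>x\<bar> - \<epsilon> \<le> x\<^sup>2 / ?r"
  proof -
    have "(\<bar>x\<bar> - \<epsilon>) * ?r \<le> x\<^sup>2"
    proof (cases "\<bar>x\<bar> \<ge> \<epsilon>")
      case True
      then have "(\<bar>x\<bar> - \<epsilon>) * ?r \<le> (\<bar>x\<bar> - \<epsilon>) * (\<bar>x\<bar> + \<epsilon>)"
        using r1 by (intro mult_left_mono) auto
      also have "\<dots> \<le> x\<^sup>2" by (simp add: algebra_simps power2_eq_square)
      finally show ?thesis .
    next
      case False
      then have "(\<bar>x\<bar> - \<epsilon>) * ?r \<le> 0" using r0 by (intro mult_nonpos_nonneg) auto
      then show ?thesis using zero_le_power2[of x] by linarith
    qed
    then show ?thesis using r0 by (simp add: pos_le_divide_eq)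
  qed
  ultimately show ?thesis by simp
qed

lemma sqrt_bounds: assumes "\<epsilon> > 0" shows "\<bar>x\<bar> \<le> sqrt (x\<^sup>2 + \<epsilon>\<^sup>2)" "sqrt (x\<^sup>2 + \<epsilon>\<^sup>2) \<le> \<bar>x\<bar> + \<epsilon>"
  using assms
  by (metis add_increasing2 real_sqrt_abs real_sqrt_le_iff zero_le_power2 le_add_same_cancel1,
      intro real_le_lsqrt) (auto simp: power2_eq_square algebra_simps)

lemma sk_tendsto: assumes "\<epsilon> \<longlonglongrightarrow> 0" shows "(\<lambda>k. sk (\<epsilon> k) x) \<longlonglongrightarrow> sgn x"
proof (cases "x = 0")
  case True then show ?thesis by (simp add: sk_def)
next
  case False
  have "(\<lambda>k. x / sqrt (x\<^sup>2 + (\<epsilon> k)\<^sup>2)) \<longlonglongrightarrow> x / sqrt (x\<^sup>2 + 0\<^sup>2)"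
    using False by (intro tendsto_intros assms) auto
  moreover have "x / \<bar>x\<bar> = sgn x" using False by (simp add: sgn_if)
  ultimately show ?thesis by (simp add: sk_def)
qed

lemma inner_l1_bound:
  fixes x y :: "real ^ 'n"
  assumes "\<And>i. \<bar>y $ i\<bar> \<le> B"
  shows "\<bar>x \<bullet> y\<bar> \<le> l1norm x * B"
proof -
  have "\<bar>x \<bullet> y\<bar> = \<bar>\<Sum>i\<in>UNIV. x $ i * y $ i\<bar>" by (simp add: inner_vec_def)
  also have "\<dots> \<le> (\<Sum>i\<in>UNIV. \<bar>x $ i\<bar> * B)"
    by (rule order_trans[OF sum_abs]) (auto intro!: sum_mono mult_left_mono assms simp: abs_mult)
  finally show ?thesis by (simp add: l1norm_def sum_distrib_right)
qed

lemma comp_le_l1: "\<bar>y $ i\<bar> \<le> l1norm (y :: real ^ 'n)"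
  unfolding l1norm_def by (rule member_le_sum) auto

lemma inner_vsk_lower:
  fixes x :: "real ^ 'n"
  assumes "\<epsilon> > 0"
  shows "x \<bullet> vsk \<epsilon> x \<ge> l1norm x - real CARD('n) * \<epsilon>"
proof -
  have "x \<bullet> vsk \<epsilon> x = (\<Sum>i\<in>UNIV. x $ i * sk \<epsilon> (x $ i))" by (simp add: inner_vec_def vsk_def)
  also have "\<dots> \<ge> (\<Sum>i\<in>UNIV. \<bar>x $ i\<bar> - \<epsilon>)" by (intro sum_mono sk_lower assms)
  finally show ?thesis by (simp add: l1norm_def sum_subtractf)
qed

lemma phik_bounds:
  fixes x :: "real ^ 'n"
  assumes "\<epsilon> > 0"
  shows "l1norm x \<le> phik \<epsilon> x" "phik \<epsilon> x \<le> l1norm x + real CARD('n) * \<epsilon>"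
proof -
  show "l1norm x \<le> phik \<epsilon> x" unfolding l1norm_def phik_def
    by (intro sum_mono sqrt_bounds(1) assms)
  have "phik \<epsilon> x \<le> (\<Sum>i\<in>UNIV. \<bar>x $ i\<bar> + \<epsilon>)" unfolding phik_def
    by (intro sum_mono sqrt_bounds(2) assms)
  then show "phik \<epsilon> x \<le> l1norm x + real CARD('n) * \<epsilon>" by (simp add: l1norm_def sum.distrib)
qed

lemma phik_deriv:
  fixes e :: "real \<Rightarrow> real ^ 'n"
  assumes "\<epsilon> > 0" "(e has_vector_derivative e') (at t within S)"
  shows "((\<lambda>\<tau>. phik \<epsilon> (e \<tau>)) has_real_derivative (e' \<bullet> vsk \<epsilon> (e t))) (at t within S)"
proof -
  have c: "((\<lambda>\<tau>. e \<tau> $ i) has_real_derivative (e' $ i)) (at t within S)" for i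
    using bounded_linear.has_vector_derivative[OF bounded_linear_vec_nth assms(2), of i]
    by (simp add: has_real_derivative_iff_has_vector_derivative)
  have pos: "(e t $ i)\<^sup>2 + \<epsilon>\<^sup>2 > 0" for i using assms(1) by (simp add: add_nonneg_pos)
  have "((\<lambda>\<tau>. sqrt ((e \<tau> $ i)\<^sup>2 + \<epsilon>\<^sup>2)) has_real_derivative (e' $ i * sk \<epsilon> (e t $ i))) (at t within S)" for i
    using pos[of i]
    by (auto intro!: derivative_eq_intros c simp: sk_def field_simps)
  then have "((\<lambda>\<tau>. \<Sum>i\<in>UNIV. sqrt ((e \<tau> $ i)\<^sup>2 + \<epsilon>\<^sup>2)) has_real_derivative (\<Sum>i\<in>UNIV. e' $ i * sk \<epsilon> (e t $ i))) (at t within S)"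
    by (intro DERIV_sum) auto
  then show ?thesis by (simp add: phik_def inner_vec_def vsk_def)
qed


lemma int_cmult: "f integrable_on S \<Longrightarrow> (\<lambda>x. (c::real) * f x) integrable_on S"
  using integrable_cmul[of f S c] by simp

theorem lemma1:
  fixes lz :: nat
    and \<alpha> \<beta>d :: real
    and e e' \<delta>3 \<delta>3' \<delta>3'' D D' D'' :: "real \<Rightarrow> real ^ 'n"
    and z z' :: "nat \<Rightarrow> real \<Rightarrow> real"
    and w w' wt :: "nat \<Rightarrow> real \<Rightarrow> real ^ 'n"
    and \<Lambda> :: "nat \<Rightarrow> real \<Rightarrow> real ^ 'c"
    and v :: "real \<Rightarrow> real ^ 'c"
    and M1 M2 :: "real \<Rightarrow> real ^ 'n"
    and d3b d3bb cd1 cd2 cM1 cdM1 cM2 :: real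
  assumes lz: "lz \<ge> 1"
    and \<alpha>: "\<alpha> > 0" and \<beta>d: "\<beta>d > 0"
    and e_d: "\<And>t. t \<ge> 0 \<Longrightarrow> (e has_vector_derivative e' t) (at t within {0..})"
    and e'_c: "continuous_on {0..} e'"
    and d3_d: "\<And>t. t \<ge> 0 \<Longrightarrow> (\<delta>3 has_vector_derivative \<delta>3' t) (at t within {0..})"
    and d3'_d: "\<And>t. t \<ge> 0 \<Longrightarrow> (\<delta>3' has_vector_derivative \<delta>3'' t) (at t within {0..})"
    and d3''_c: "continuous_on {0..} \<delta>3''"
    and D_d: "\<And>t. t \<ge> 0 \<Longrightarrow> (D has_vector_derivative D' t) (at t within {0..})"
    and D'_d: "\<And>t. t \<ge> 0 \<Longrightarrow> (D' has_vector_derivative D'' t) (at t within {0..})"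
    and D''_c: "continuous_on {0..} D''"
    and z_d: "\<And>j t. j \<in> {1..lz} \<Longrightarrow> t \<ge> 0 \<Longrightarrow> (z j has_real_derivative z' j t) (at t within {0..})"
    and z'_c: "\<And>j. j \<in> {1..lz} \<Longrightarrow> continuous_on {0..} (z' j)"
    and w_d: "\<And>j t. j \<in> {1..lz} \<Longrightarrow> t \<ge> 0 \<Longrightarrow> (w j has_vector_derivative w' j t) (at t within {0..})"
    and w'_c: "\<And>j. j \<in> {1..lz} \<Longrightarrow> continuous_on {0..} (w' j)"
    and \<Lambda>_c: "\<And>j. j \<in> {1..lz} \<Longrightarrow> continuous_on {0..} (\<Lambda> j)"
    and v_c: "continuous_on {0..} v"
    and wt_c: "\<And>j. j \<in> {1..lz} \<Longrightarrow> continuous_on {0..} (wt j)"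
    and M1_def: "M1 = (\<lambda>t. \<Sum>j=1..lz. z j t *\<^sub>R w j t)"
    and M2_def: "M2 = (\<lambda>t. \<Sum>j=1..lz. (\<Lambda> j t \<bullet> v t) *\<^sub>R wt j t)"
    and pos: "d3b > 0" "d3bb > 0" "cd1 > 0" "cd2 > 0" "cM1 > 0" "cdM1 > 0" "cM2 > 0"
    and b_d3': "\<And>t. t \<ge> 0 \<Longrightarrow> l1norm (\<delta>3' t) < d3b"
    and b_d3'': "\<And>t. t \<ge> 0 \<Longrightarrow> l1norm (\<delta>3'' t) < d3bb"
    and b_D': "\<And>t. t \<ge> 0 \<Longrightarrow> norm (D' t) \<le> cd1"
    and b_D'': "\<And>t. t \<ge> 0 \<Longrightarrow> norm (D'' t) \<le> cd2"
    and b_M1: "\<And>t. t \<ge> 0 \<Longrightarrow> l1norm (M1 t) < cM1"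
    and b_M1': "\<And>t. t \<ge> 0 \<Longrightarrow> l1norm (vector_derivative M1 (at t within {0..})) < cdM1"
    and b_M2: "\<And>t. t \<ge> 0 \<Longrightarrow> l1norm (M2 t) < cM2"
    and gain: "\<beta>d \<ge> d3b + cd1 + cM1 + (1 / \<alpha>) * (d3bb + cd2 + cdM1 + cM2)"
  shows "\<forall>t\<ge>0.
    (\<beta>d * l1norm (e 0) - e 0 \<bullet> (\<delta>3' 0 + D' 0 + M1 0))
    + integral {0..t} (\<lambda>\<tau>.
        - ((e' \<tau> + \<alpha> *\<^sub>R e \<tau>) \<bullet> (\<delta>3' \<tau> + D' \<tau> - \<beta>d *\<^sub>R vsgn (e \<tau>)))
        - M1 \<tau> \<bullet> e' \<tau> - M2 \<tau> \<bullet> e \<tau>) \<ge> 0"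
proof (intro allI impI)
  fix t :: real assume t0: "t \<ge> 0"
  define S where "S = {0..t}"
  have SS: "S \<subseteq> {0..}" unfolding S_def by auto
  define M1' where "M1' = (\<lambda>\<tau>. \<Sum>j=1..lz. z j \<tau> *\<^sub>R w' j \<tau> + z' j \<tau> *\<^sub>R w j \<tau>)"
  define N where "N = (\<lambda>\<tau>. \<delta>3' \<tau> + D' \<tau> + M1 \<tau>)"
  define N' where "N' = (\<lambda>\<tau>. \<delta>3'' \<tau> + D'' \<tau> + M1' \<tau>)"
  define s where "s = (\<lambda>\<tau>. e' \<tau> + \<alpha> *\<^sub>R e \<tau>)"
  define A where "A = (\<lambda>\<tau>. - (s \<tau> \<bullet> (\<delta>3' \<tau> + D' \<tau>)) - M1 \<tau> \<bullet> e' \<tau> - M2 \<tau> \<bullet> e \<tau>)"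
  define \<Omega>0 where "\<Omega>0 = \<beta>d * l1norm (e 0) - e 0 \<bullet> (\<delta>3' 0 + D' 0 + M1 0)"
  define ep where "ep = (\<lambda>k::nat. inverse (real (Suc k)))"
  define p where "p = (\<lambda>k \<tau>. s \<tau> \<bullet> vsk (ep k) (e \<tau>))"
  define p0 where "p0 = (\<lambda>\<tau>. s \<tau> \<bullet> vsgn (e \<tau>))"
  define nn where "nn = real CARD('n)"
  have ep_pos: "ep k > 0" for k unfolding ep_def by simp
  have nn0: "nn \<ge> 0" unfolding nn_def by simp

  have M1_d: "(M1 has_vector_derivative M1' \<tau>) (at \<tau> within {0..})" if "\<tau> \<ge> 0" for \<tau>
    unfolding M1_def M1'_def
    by (rule has_vector_derivative_sum, rule has_vector_derivative_scaleR)
       (use z_d w_d that in \<open>auto simp: has_real_derivative_iff_has_vector_derivative\<close>)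
  have N_d: "(N has_vector_derivative N' \<tau>) (at \<tau> within {0..})" if "\<tau> \<ge> 0" for \<tau>
    unfolding N_def N'_def using that
    by (intro has_vector_derivative_add M1_d d3'_d D'_d)
  have e_c: "continuous_on {0..} e"
    by (rule continuous_on_vector_derivative) (use e_d in auto)
  have d3'_c: "continuous_on {0..} \<delta>3'"
    by (rule continuous_on_vector_derivative) (use d3'_d in auto)
  have D'_c: "continuous_on {0..} D'"
    by (rule continuous_on_vector_derivative) (use D'_d in auto)
  have M1_c: "continuous_on {0..} M1"
    by (rule continuous_on_vector_derivative) (use M1_d in auto)
  have M2_c: "continuous_on {0..} M2"
    unfolding M2_def
    by (intro continuous_intros) (use \<Lambda>_c v_c wt_c in auto)
  have s_c: "continuous_on {0..} s" unfolding s_def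
    by (intro continuous_intros e'_c e_c)
  have A_c: "continuous_on {0..} A" unfolding A_def
    by (intro continuous_intros s_c d3'_c D'_c M1_c M2_c e'_c e_c)
  have A_i: "A integrable_on S" unfolding S_def
    by (rule integrable_continuous_interval) (rule continuous_on_subset[OF A_c], auto)
  have p_c: "continuous_on {0..} (p k)" for k
  proof -
    have "continuous_on {0..} (\<lambda>\<tau>. vsk (ep k) (e \<tau>))"
      unfolding vsk_def sk_def
      using ep_pos[of k]
      by (intro continuous_on_vec_lambda continuous_intros e_c) (auto simp: add_nonneg_pos)
    then show ?thesis unfolding p_def by (intro continuous_intros s_c)
  qed
  have p_i: "p k integrable_on S" for k unfolding S_def
    by (rule integrable_continuous_interval) (rule continuous_on_subset[OF p_c], auto)
  have h_c: "continuous_on {0..} (\<lambda>\<tau>. l1norm (s \<tau>))" unfolding l1norm_def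
    by (intro continuous_intros s_c)
  have h_i: "(\<lambda>\<tau>. l1norm (s \<tau>)) integrable_on S" unfolding S_def
    by (rule integrable_continuous_interval) (rule continuous_on_subset[OF h_c], auto)
  have p_le: "norm (p k \<tau>) \<le> l1norm (s \<tau>)" for k \<tau>
    using inner_l1_bound[of "vsk (ep k) (e \<tau>)" 1 "s \<tau>"] sk_le1
    by (simp add: p_def vsk_def)
  have ep_lim: "ep \<longlonglongrightarrow> 0" unfolding ep_def by (rule LIMSEQ_inverse_real_of_nat)
  have p_lim: "(\<lambda>k. p k \<tau>) \<longlonglongrightarrow> p0 \<tau>" for \<tau>
    unfolding p_def p0_def inner_vec_def vsk_def vsgn_def
    by (simp, intro tendsto_sum tendsto_mult_left sk_tendsto ep_lim)
  have p0_i: "p0 integrable_on S" and p_int_lim: "(\<lambda>k. integral S (p k)) \<longlonglongrightarrow> integral S p0"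
    using dominated_convergence[OF p_i h_i _ p_lim] p_le by auto

  have gain': "\<alpha> * \<beta>d \<ge> \<alpha> * (d3b + cd1 + cM1) + (d3bb + cd2 + cdM1 + cM2)"
  proof -
    have "\<alpha> * \<beta>d \<ge> \<alpha> * (d3b + cd1 + cM1 + (1 / \<alpha>) * (d3bb + cd2 + cdM1 + cM2))"
      using gain \<alpha> by (intro mult_left_mono) auto
    moreover have "\<alpha> * ((1 / \<alpha>) * (d3bb + cd2 + cdM1 + cM2)) = d3bb + cd2 + cdM1 + cM2"
      using \<alpha> by simp
    ultimately show ?thesis by (simp only: distrib_left)
  qed
  have gain'': "\<beta>d \<ge> d3b + cd1 + cM1"
  proof -
    have "(1 / \<alpha>) * (d3bb + cd2 + cdM1 + cM2) \<ge> 0" using \<alpha> pos by auto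
    then show ?thesis using gain by linarith
  qed

  have key: "\<Omega>0 + integral S A + \<beta>d * integral S (p k) \<ge> - (\<beta>d * nn * ep k * (1 + \<alpha> * t))" for k
  proof -
    define \<epsilon> where "\<epsilon> = ep k"
    have \<epsilon>0: "\<epsilon> > 0" unfolding \<epsilon>_def by (rule ep_pos)
    define H where "H = (\<lambda>\<tau>. \<beta>d * phik \<epsilon> (e \<tau>) - e \<tau> \<bullet> N \<tau>)"
    define H' where "H' = (\<lambda>\<tau>. \<beta>d * (e' \<tau> \<bullet> vsk \<epsilon> (e \<tau>)) - (e \<tau> \<bullet> N' \<tau> + e' \<tau> \<bullet> N \<tau>))"
    have H_d: "(H has_vector_derivative H' \<tau>) (at \<tau> within S)" if "\<tau> \<in> S" for \<tau>
    proof -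
      have t0': "\<tau> \<ge> 0" using that unfolding S_def by auto
      have ed: "(e has_vector_derivative e' \<tau>) (at \<tau> within S)"
        using has_vector_derivative_within_subset[OF e_d[OF t0'] SS] .
      have Nd: "(N has_vector_derivative N' \<tau>) (at \<tau> within S)"
        using has_vector_derivative_within_subset[OF N_d[OF t0'] SS] .
      have "((\<lambda>x. e x \<bullet> N x) has_vector_derivative (e \<tau> \<bullet> N' \<tau> + e' \<tau> \<bullet> N \<tau>)) (at \<tau> within S)"
        by (rule bounded_bilinear.has_vector_derivative[OF bounded_bilinear_inner ed Nd])
      then have i1: "((\<lambda>x. e x \<bullet> N x) has_real_derivative (e \<tau> \<bullet> N' \<tau> + e' \<tau> \<bullet> N \<tau>)) (at \<tau> within S)"
        by (simp add: has_real_derivative_iff_has_vector_derivative)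
      have i2: "((\<lambda>x. phik \<epsilon> (e x)) has_real_derivative (e' \<tau> \<bullet> vsk \<epsilon> (e \<tau>))) (at \<tau> within S)"
        by (rule phik_deriv[OF \<epsilon>0 ed])
      have "(H has_real_derivative H' \<tau>) (at \<tau> within S)"
        unfolding H_def H'_def by (intro DERIV_diff DERIV_cmult i1 i2)
      then show ?thesis by (simp add: has_real_derivative_iff_has_vector_derivative)
    qed
    have H_int: "(H' has_integral (H t - H 0)) S"
      unfolding S_def by (rule fundamental_theorem_of_calculus[OF t0]) (use H_d S_def in auto)
    define g where "g = (\<lambda>\<tau>. A \<tau> + \<beta>d * p k \<tau> - H' \<tau>)"
    have Ap_i: "(\<lambda>\<tau>. A \<tau> + \<beta>d * p k \<tau>) integrable_on S"
      by (intro integrable_add int_cmult A_i p_i)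
    have g_i: "g integrable_on S" unfolding g_def
      by (intro integrable_diff Ap_i) (use H_int in blast)
    have g_lb: "g \<tau> \<ge> - (\<alpha> * \<beta>d * nn * \<epsilon>)" if "\<tau> \<in> S" for \<tau>
    proof -
      have t0': "\<tau> \<ge> 0" using that unfolding S_def by auto
      define L where "L = l1norm (e \<tau>)"
      have L0: "L \<ge> 0" unfolding L_def l1norm_def by (auto intro: sum_nonneg)
      have geq: "g \<tau> = - (\<alpha> * (e \<tau> \<bullet> (\<delta>3' \<tau> + D' \<tau>))) - e \<tau> \<bullet> M2 \<tau> + \<alpha> * \<beta>d * (e \<tau> \<bullet> vsk \<epsilon> (e \<tau>)) + e \<tau> \<bullet> N' \<tau>"
        unfolding g_def A_def p_def H'_def N_def s_def \<epsilon>_def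
        by (simp add: inner_add_left inner_add_right inner_diff_left inner_diff_right algebra_simps inner_commute)
      have b1: "\<bar>e \<tau> \<bullet> (\<delta>3' \<tau> + D' \<tau>)\<bar> \<le> L * (d3b + cd1)" unfolding L_def
      proof (rule inner_l1_bound)
        fix i
        have "\<bar>(\<delta>3' \<tau> + D' \<tau>) $ i\<bar> \<le> \<bar>\<delta>3' \<tau> $ i\<bar> + \<bar>D' \<tau> $ i\<bar>" by simp
        also have "\<dots> \<le> l1norm (\<delta>3' \<tau>) + norm (D' \<tau>)"
          by (intro add_mono comp_le_l1 component_le_norm_cart)
        also have "\<dots> \<le> d3b + cd1" using b_d3'[OF t0'] b_D'[OF t0'] by linarith
        finally show "\<bar>(\<delta>3' \<tau> + D' \<tau>) $ i\<bar> \<le> d3b + cd1" .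
      qed
      have b2: "\<bar>e \<tau> \<bullet> M2 \<tau>\<bar> \<le> L * cM2" unfolding L_def
        by (rule inner_l1_bound) (use comp_le_l1 b_M2[OF t0'] in \<open>meson less_imp_le order_trans\<close>)
      have M1'eq: "vector_derivative M1 (at \<tau> within {0..}) = M1' \<tau>"
      proof (rule vector_derivative_within[OF _ M1_d[OF t0']])
        have "at_right \<tau> \<le> at \<tau> within {0..}" using t0' by (intro at_le) auto
        then show "at \<tau> within {0..} \<noteq> bot"
          using trivial_limit_at_right_real[of \<tau>] by (metis bot.extremum_uniqueI)
      qed
      have b3: "\<bar>e \<tau> \<bullet> N' \<tau>\<bar> \<le> L * (d3bb + cd2 + cdM1)" unfolding L_def
      proof (rule inner_l1_bound)
        fix i
        have "\<bar>N' \<tau> $ i\<bar> \<le> \<bar>\<delta>3'' \<tau> $ i\<bar> + \<bar>D'' \<tau> $ i\<bar> + \<bar>M1' \<tau> $ i\<bar>" unfolding N'_def by simp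
        also have "\<dots> \<le> l1norm (\<delta>3'' \<tau>) + norm (D'' \<tau>) + l1norm (M1' \<tau>)"
          by (intro add_mono comp_le_l1 component_le_norm_cart)
        also have "\<dots> \<le> d3bb + cd2 + cdM1" using b_d3''[OF t0'] b_D''[OF t0'] b_M1'[OF t0'] unfolding M1'eq by linarith
        finally show "\<bar>N' \<tau> $ i\<bar> \<le> d3bb + cd2 + cdM1" .
      qed
      have b4: "e \<tau> \<bullet> vsk \<epsilon> (e \<tau>) \<ge> L - nn * \<epsilon>" unfolding L_def nn_def by (rule inner_vsk_lower[OF \<epsilon>0])
      have c1: "\<alpha> * (e \<tau> \<bullet> (\<delta>3' \<tau> + D' \<tau>)) \<le> \<alpha> * (L * (d3b + cd1))"
        using b1 \<alpha> by (intro mult_left_mono) auto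
      have c4: "\<alpha> * \<beta>d * (e \<tau> \<bullet> vsk \<epsilon> (e \<tau>)) \<ge> \<alpha> * \<beta>d * (L - nn * \<epsilon>)"
        using b4 \<alpha> \<beta>d by (intro mult_left_mono) auto
      have c5: "L * (\<alpha> * \<beta>d - \<alpha> * (d3b + cd1) - cM2 - (d3bb + cd2 + cdM1)) \<ge> 0"
      proof -
        have aM: "\<alpha> * cM1 > 0" using \<alpha> pos by simp
        show ?thesis using L0 by (intro mult_nonneg_nonneg) (use gain' aM in \<open>auto simp: algebra_simps\<close>)
      qed
      show ?thesis using geq b2 b3 c1 c4 c5 by (simp add: algebra_simps)
    qed
    have g_int: "integral S g \<ge> - (t * (\<alpha> * \<beta>d * nn * \<epsilon>))"
    proof -
      have "integral S (\<lambda>_. - (\<alpha> * \<beta>d * nn * \<epsilon>)) \<le> integral S g"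
        by (rule integral_le) (use g_lb g_i in \<open>auto simp: S_def\<close>)
      then show ?thesis unfolding S_def using t0 by (simp add: algebra_simps)
    qed
    have split: "integral S (\<lambda>\<tau>. A \<tau> + \<beta>d * p k \<tau>) = (H t - H 0) + integral S g"
    proof -
      have "(\<lambda>\<tau>. A \<tau> + \<beta>d * p k \<tau>) = (\<lambda>\<tau>. H' \<tau> + g \<tau>)" unfolding g_def by auto
      then show ?thesis using integral_add[OF has_integral_integrable[OF H_int] g_i] integral_unique[OF H_int]
        by simp
    qed
    have lhs: "integral S (\<lambda>\<tau>. A \<tau> + \<beta>d * p k \<tau>) = integral S A + \<beta>d * integral S (p k)"
      using integral_add[OF A_i int_cmult[OF p_i]] by simp
    have Ht: "H t \<ge> 0"
    proof -
      have "\<bar>e t \<bullet> N t\<bar> \<le> l1norm (e t) * (d3b + cd1 + cM1)"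
      proof (rule inner_l1_bound)
        fix i
        have "\<bar>N t $ i\<bar> \<le> \<bar>\<delta>3' t $ i\<bar> + \<bar>D' t $ i\<bar> + \<bar>M1 t $ i\<bar>" unfolding N_def by simp
        also have "\<dots> \<le> l1norm (\<delta>3' t) + norm (D' t) + l1norm (M1 t)"
          by (intro add_mono comp_le_l1 component_le_norm_cart)
        also have "\<dots> \<le> d3b + cd1 + cM1" using b_d3'[OF t0] b_D'[OF t0] b_M1[OF t0] by linarith
        finally show "\<bar>N t $ i\<bar> \<le> d3b + cd1 + cM1" .
      qed
      moreover have "\<beta>d * phik \<epsilon> (e t) \<ge> \<beta>d * l1norm (e t)"
        using phik_bounds(1)[OF \<epsilon>0] \<beta>d by (intro mult_left_mono) auto
      moreover have "l1norm (e t) * (d3b + cd1 + cM1) \<le> \<beta>d * l1norm (e t)"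
        using gain'' by (metis l1norm_def mult.commute mult_left_mono sum_nonneg abs_ge_zero)
      ultimately show ?thesis unfolding H_def by linarith
    qed
    have H0: "\<Omega>0 - H 0 \<ge> - (\<beta>d * nn * \<epsilon>)"
    proof -
      have "\<beta>d * phik \<epsilon> (e 0) \<le> \<beta>d * (l1norm (e 0) + nn * \<epsilon>)"
        using phik_bounds(2)[OF \<epsilon>0] \<beta>d unfolding nn_def by (intro mult_left_mono) auto
      then show ?thesis unfolding \<Omega>0_def H_def N_def by (simp add: algebra_simps)
    qed
    show ?thesis using split lhs Ht H0 g_int unfolding \<epsilon>_def
      by (simp add: algebra_simps)
  qed
  have lim1: "(\<lambda>k. - (\<beta>d * nn * ep k * (1 + \<alpha> * t))) \<longlonglongrightarrow> 0"
    using tendsto_minus[OF tendsto_mult[OF tendsto_mult[OF tendsto_const ep_lim] tendsto_const, of "\<beta>d * nn" "1 + \<alpha> * t"]]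
    by simp
  have lim2: "(\<lambda>k. \<Omega>0 + integral S A + \<beta>d * integral S (p k)) \<longlonglongrightarrow> \<Omega>0 + integral S A + \<beta>d * integral S p0"
    by (intro tendsto_intros p_int_lim)
  have fin: "\<Omega>0 + integral S A + \<beta>d * integral S p0 \<ge> 0"
    by (rule LIMSEQ_le[OF lim1 lim2]) (use key in auto)
  have feq: "(\<lambda>\<tau>. - ((e' \<tau> + \<alpha> *\<^sub>R e \<tau>) \<bullet> (\<delta>3' \<tau> + D' \<tau> - \<beta>d *\<^sub>R vsgn (e \<tau>)))
        - M1 \<tau> \<bullet> e' \<tau> - M2 \<tau> \<bullet> e \<tau>) = (\<lambda>\<tau>. A \<tau> + \<beta>d * p0 \<tau>)"
    unfolding A_def p0_def s_def by (auto simp: inner_diff_right algebra_simps)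
  have "integral S (\<lambda>\<tau>. A \<tau> + \<beta>d * p0 \<tau>) = integral S A + \<beta>d * integral S p0"
    using integral_add[OF A_i int_cmult[OF p0_i]] by simp
  then show "(\<beta>d * l1norm (e 0) - e 0 \<bullet> (\<delta>3' 0 + D' 0 + M1 0))
    + integral {0..t} (\<lambda>\<tau>.
        - ((e' \<tau> + \<alpha> *\<^sub>R e \<tau>) \<bullet> (\<delta>3' \<tau> + D' \<tau> - \<beta>d *\<^sub>R vsgn (e \<tau>)))
        - M1 \<tau> \<bullet> e' \<tau> - M2 \<tau> \<bullet> e \<tau>) \<ge> 0"
    using fin feq unfolding S_def \<Omega>0_def by simp
qed

end
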